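(* Let $X$ be a Hausdorff space and $\mu:X^k\to X$ a continuous $k$-mean that is $\beta$-stable and admits a $\beta$-extension $\tilde\mu$. Then $\tilde\mu$ is a stable extension of $\mu$.
   Context: A $k$-mean is a map $\mu:X^k\to X$ with $\mu(x,\ldots,x)=x$. Barycentric operator $\beta:X^{k+1}\to X^{k+1}$, $\beta(\mathbf{x})_j=\mu(\pi_{\neq j}\mathbf{x})$ with $\pi_{\neq j}(x_1,\ldots,x_{k+1})=(x_1,\ldots,x_{j-1},x_{j+1},\ldots,x_{k+1})$. A $(k+1)$-mean $\tilde\mu$ is a $\beta$-extension of $\mu$ if $\beta^n(\mathbf{x})\to(\tilde\mu(\mathbf{x}),\ldots,\tilde\mu(\mathbf{x}))$ for every $\mathbf{x}$. $\mu$ is $\beta$-stable if for all $\mathbf{x}\in X^{k+1}$: $\pi_{k+1}(\mathbf{x})=\mu(\pi_{\neq k+1}\mathbf{x})$ implies $\pi_{k+1}(\beta(\mathbf{x}))=\mu(\pi_{\neq k+1}(\beta(\mathbf{x})))$, where $\pi_{k+1}$ is the last coordinate. A $(k+1)$-mean $\nu$ is a stable extension of $\mu$ if $\nu(x_1,\ldots,x_k,\mu(x_1,\ldots,x_k))=\mu(x_1,\ldots,x_k)$ for all $x_1,\ldots,x_k\in X$. *)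

theory Defs
  imports "HOL-Analysis.Analysis"
begin

text \<open>Points of X^m are represented as elements of the carrier of the product
topology \<open>product_topology (\<lambda>_. X) {..<m}\<close>, i.e. extensional functions on the
index set {0,...,m-1} (0-based indices) with values in the topspace of X.\<close>

abbreviation power_top :: "'a topology \<Rightarrow> nat \<Rightarrow> (nat \<Rightarrow> 'a) topology" where
  "power_top X m \<equiv> product_topology (\<lambda>_. X) {..<m}"

definition const_tuple :: "nat \<Rightarrow> 'a \<Rightarrow> (nat \<Rightarrow> 'a)" where
  "const_tuple m x = restrict (\<lambda>_. x) {..<m}"

definition is_mean :: "'a topology \<Rightarrow> nat \<Rightarrow> ((nat \<Rightarrow> 'a) \<Rightarrow> 'a) \<Rightarrow> bool" where
  "is_mean X m mu \<longleftrightarrow>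
     (\<forall>x \<in> topspace (power_top X m). mu x \<in> topspace X) \<and>
     (\<forall>x \<in> topspace X. mu (const_tuple m x) = x)"

definition omit :: "nat \<Rightarrow> nat \<Rightarrow> (nat \<Rightarrow> 'a) \<Rightarrow> (nat \<Rightarrow> 'a)" where
  "omit k j x = restrict (\<lambda>i. if i < j then x i else x (Suc i)) {..<k}"

definition bary :: "nat \<Rightarrow> ((nat \<Rightarrow> 'a) \<Rightarrow> 'a) \<Rightarrow> (nat \<Rightarrow> 'a) \<Rightarrow> (nat \<Rightarrow> 'a)" where
  "bary k mu x = restrict (\<lambda>j. mu (omit k j x)) {..<Suc k}"

definition beta_extension ::
  "'a topology \<Rightarrow> nat \<Rightarrow> ((nat \<Rightarrow> 'a) \<Rightarrow> 'a) \<Rightarrow> ((nat \<Rightarrow> 'a) \<Rightarrow> 'a) \<Rightarrow> bool" where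
  "beta_extension X k mu nu \<longleftrightarrow>
     is_mean X (Suc k) nu \<and>
     (\<forall>x \<in> topspace (power_top X (Suc k)).
        limitin (power_top X (Suc k)) (\<lambda>n. (bary k mu ^^ n) x)
                (const_tuple (Suc k) (nu x)) sequentially)"

text \<open>beta-stability; the last coordinate of a (k+1)-tuple has index k.\<close>
definition beta_stable :: "'a topology \<Rightarrow> nat \<Rightarrow> ((nat \<Rightarrow> 'a) \<Rightarrow> 'a) \<Rightarrow> bool" where
  "beta_stable X k mu \<longleftrightarrow>
     (\<forall>x \<in> topspace (power_top X (Suc k)).
        x k = mu (omit k k x) \<longrightarrow> bary k mu x k = mu (omit k k (bary k mu x)))"

definition snoc_tuple :: "nat \<Rightarrow> (nat \<Rightarrow> 'a) \<Rightarrow> 'a \<Rightarrow> (nat \<Rightarrow> 'a)" where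
  "snoc_tuple k x y = restrict (\<lambda>i. if i < k then x i else y) {..<Suc k}"

definition stable_extension ::
  "'a topology \<Rightarrow> nat \<Rightarrow> ((nat \<Rightarrow> 'a) \<Rightarrow> 'a) \<Rightarrow> ((nat \<Rightarrow> 'a) \<Rightarrow> 'a) \<Rightarrow> bool" where
  "stable_extension X k mu nu \<longleftrightarrow>
     is_mean X (Suc k) nu \<and>
     (\<forall>x \<in> topspace (power_top X k). nu (snoc_tuple k x (mu x)) = mu x)"

end

theory Submission
  imports Defs
begin

lemma bary_in:
  assumes "is_mean X k mu" "x \<in> topspace (power_top X (Suc k))"
  shows "bary k mu x \<in> topspace (power_top X (Suc k))"
proof -
  have "omit k j x \<in> topspace (power_top X k)" if "j < Suc k" for j
    using assms(2) by (auto simp: omit_def PiE_def Pi_def)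
  then show ?thesis using assms(1) unfolding is_mean_def bary_def
    by (auto simp: PiE_def Pi_def)
qed

theorem proposition8p2:
  fixes X :: "'a topology" and k :: nat
    and mu :: "(nat \<Rightarrow> 'a) \<Rightarrow> 'a" and nu :: "(nat \<Rightarrow> 'a) \<Rightarrow> 'a"
  assumes "Hausdorff_space X"
    and "is_mean X k mu"
    and "continuous_map (power_top X k) X mu"
    and "beta_stable X k mu"
    and "beta_extension X k mu nu"
  shows "stable_extension X k mu nu"
proof -
  have nm: "is_mean X (Suc k) nu" using assms(5) by (simp add: beta_extension_def)
  have "nu (snoc_tuple k x (mu x)) = mu x" if x: "x \<in> topspace (power_top X k)" for x
  proof -
    define y where "y = snoc_tuple k x (mu x)"
    have mux: "mu x \<in> topspace X" using assms(2) x by (simp add: is_mean_def)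
    have ytop: "y \<in> topspace (power_top X (Suc k))"
      using x mux by (auto simp: y_def snoc_tuple_def PiE_def Pi_def)
    have om: "omit k k y = x"
      using x by (auto simp: y_def snoc_tuple_def omit_def PiE_def extensional_def)
    have yk: "y k = mu x" by (simp add: y_def snoc_tuple_def)
    define z where "z n = (bary k mu ^^ n) y" for n
    have inv: "z n \<in> topspace (power_top X (Suc k)) \<and> z n k = mu (omit k k (z n)) \<and> z n k = mu x" for n
    proof (induction n)
      case 0
      then show ?case using ytop om yk by (simp add: z_def)
    next
      case (Suc n)
      have zs: "z (Suc n) = bary k mu (z n)" by (simp add: z_def)
      have "bary k mu (z n) k = mu (omit k k (z n))" by (simp add: bary_def)
      moreover have "bary k mu (z n) k = mu (omit k k (bary k mu (z n)))"
        using assms(4) Suc.IH unfolding beta_stable_def by blast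
      ultimately show ?case using Suc.IH bary_in[OF assms(2)] zs by metis
    qed
    have "limitin (power_top X (Suc k)) z (const_tuple (Suc k) (nu y)) sequentially"
      using assms(5) ytop unfolding beta_extension_def z_def[abs_def] by blast
    then have "limitin X (\<lambda>n. z n k) (const_tuple (Suc k) (nu y) k) sequentially"
      by (simp add: limitin_componentwise)
    moreover have "(\<lambda>n. z n k) = (\<lambda>n. mu x)" using inv by metis
    ultimately have l1: "limitin X (\<lambda>n. mu x) (nu y) sequentially"
      by (simp add: const_tuple_def)
    have l2: "limitin X (\<lambda>n. mu x) (mu x) sequentially" using mux by simp
    show ?thesis using limitin_Hausdorff_unique[OF l1 l2 _ assms(1)] y_def by simp
  qed
  then show ?thesis using nm by (simp add: stable_extension_def)
qed

end
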